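(* Let $\Gamma$ be block-finite and $\mathbb G,\mathbb G^*$ as below. Suppose $\hat x\in\mathrm{Range}_1(\mathbb G^* )$, $x\in\mathbb G(\hat x)$, and $f\in\langle\Gamma\rangle$ is an $m$-ary function with $\arg\min f=\mathbb G(\hat x)$. Then $(a,\dots,a)\in\mathrm{dom} f$ for every $a\in\{x_1,\dots,x_m\}$.
   Context: $D$ finite, $m\ge2$, cost functions $f:D^n\to\mathbb Q\cup\{\infty\}$, $\mathrm{dom} f=\{x:f(x)<\infty\}$. Block-finite: $D$ partitioned into $\{D_v:v\in V\}$ with (a) for each $a\in D_v$ a unary $g_a:D\to D$ mapping $\mathrm{dom} f$ into itself for all $f\in\Gamma$, $g_a(b)=a$ for $b\in D_v$; (b) $\mathrm{dom} f\in\Gamma$ for $f\in\Gamma$ and equality $=_D\in\Gamma$; (c) each $n$-ary $f\in\Gamma\setminus\{=_D\}$ has $\mathrm{dom} f\subseteq D_{v_1}\times\dots\times D_{v_n}$. $\langle\Gamma\rangle$: functions $f(x_1,\dots,x_k)=\min_{x_{k+1},\dots,x_N}f_{\mathcal I}(x_1,\dots,x_N)$ for $\mathrm{VCSP}(\Gamma)$ objectives $f_{\mathcal I}$. Maps $\mathbf g=(g_1,\dots,g_m):D^m\to D^m$ act on $[D^n]^m$ coordinatewise; $f^m(x)=\frac1m\sum f(x^i)$; generalized fractional polymorphism of arity $m\to m$: finitely supported distribution $\rho$ on maps with $\sum\rho(\mathbf g)f^m(\mathbf g(x))\le f^m(x)$ for $f\in\Gamma$, $x\in[\mathrm{dom}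 f]^m$. $\Omega=\{\mathbf g:(g_{\pi(1)},\dots,g_{\pi(m)})(x)=\mathbf g(x_{\pi(1)},\dots,x_{\pi(m)})\ \forall x\in D^m,\pi\}$. $\omega$: generalized fractional polymorphism of arity $m\to m$ with support in $\Omega$ containing the support of every other such. $\mathbb G=\{\mathbf g_k\circ\dots\circ\mathbf g_1:k\ge0,\mathbf g_i\in\mathrm{supp}(\omega)\}$; $E=\{(\mathbf g,\mathbf h\circ\mathbf g):\mathbf g\in\mathbb G,\mathbf h\in\mathrm{supp}(\omega)\}$; $\mathbb G^*$ the union of strongly connected components of $(\mathbb G,E)$ without outgoing edges; $\mathrm{Range}_1(\mathbb G^* )=\{\mathbf g(y):\mathbf g\in\mathbb G^*,y\in D^m\}$; $\mathbb G(\hat x)=\{\mathbf g(\hat x):\mathbf g\in\mathbb G\}$. *)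

theory Defs
  imports "HOL-Library.Extended_Real" "HOL-Combinatorics.Permutations"
begin

text \<open>A cost function of arity n on domain 'a is represented as a pair (n, f), where
  f maps tuples (lists of length n) to rationals or +infinity; lists of other length get
  the junk value +infinity, so that the representation is canonical.\<close>
type_synonym 'a cost = "nat \<times> ('a list \<Rightarrow> ereal)"

definition wf_cost :: "'a cost \<Rightarrow> bool" where
  "wf_cost F \<longleftrightarrow> (\<forall>xs. length xs \<noteq> fst F \<longrightarrow> snd F xs = \<infinity>)
     \<and> (\<forall>xs. snd F xs = \<infinity> \<or> (\<exists>q::rat. snd F xs = ereal (of_rat q)))"

definition cost_language :: "'a cost set \<Rightarrow> bool" where
  "cost_language \<Gamma> \<longleftrightarrow> (\<forall>F\<in>\<Gamma>. wf_cost F)"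

definition cdom :: "'a cost \<Rightarrow> 'a list set" where
  "cdom F = {xs. snd F xs < \<infinity>}"

definition dom_cost :: "'a cost \<Rightarrow> 'a cost" where
  "dom_cost F = (fst F, \<lambda>xs. if snd F xs < \<infinity> then 0 else \<infinity>)"

definition eq_cost :: "'a cost" where
  "eq_cost = (2, \<lambda>xs. if length xs = 2 \<and> xs ! 0 = xs ! 1 then 0 else \<infinity>)"

text \<open>Block-finiteness; the partition {D_v} is given by the block map blk (D_v = fibre of v).\<close>
definition block_finite :: "'a cost set \<Rightarrow> ('a \<Rightarrow> 'b) \<Rightarrow> bool" where
  "block_finite \<Gamma> blk \<longleftrightarrow>
     (\<forall>a. \<exists>ga::'a \<Rightarrow> 'a. (\<forall>F\<in>\<Gamma>. \<forall>xs\<in>cdom F. map ga xs \<in> cdom F)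
                        \<and> (\<forall>b. blk b = blk a \<longrightarrow> ga b = a))
   \<and> (\<forall>F\<in>\<Gamma>. dom_cost F \<in> \<Gamma>) \<and> eq_cost \<in> \<Gamma>
   \<and> (\<forall>F\<in>\<Gamma> - {eq_cost}. \<exists>vs. length vs = fst F \<and>
          (\<forall>xs\<in>cdom F. \<forall>i<fst F. blk (xs ! i) = vs ! i))"

definition vcsp_instance :: "'a cost set \<Rightarrow> nat \<Rightarrow> ('a cost \<times> nat list) list \<Rightarrow> bool" where
  "vcsp_instance \<Gamma> N I \<longleftrightarrow>
     (\<forall>t\<in>set I. fst t \<in> \<Gamma> \<and> length (snd t) = fst (fst t) \<and> (\<forall>i\<in>set (snd t). i < N))"

definition inst_obj :: "('a cost \<times> nat list) list \<Rightarrow> (nat \<Rightarrow> 'a) \<Rightarrow> ereal" where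
  "inst_obj I s = (\<Sum>t\<leftarrow>I. snd (fst t) (map s (snd t)))"

text \<open>The expressive power \<langle>\<Gamma>\<rangle>: minimise the objective over the variables k..N-1.\<close>
definition expr_clone :: "'a cost set \<Rightarrow> 'a cost set" where
  "expr_clone \<Gamma> = {F. \<exists>k N I. k \<le> N \<and> vcsp_instance \<Gamma> N I \<and>
      F = (k, \<lambda>xs. if length xs = k
                    then (INF s\<in>{s. \<forall>i<k. s i = xs ! i}. inst_obj I s) else \<infinity>)}"

definition argmin_cost :: "'a cost \<Rightarrow> 'a list set" where
  "argmin_cost F = {xs. length xs = fst F \<and> snd F xs < \<infinity> \<and>
      (\<forall>ys. length ys = fst F \<longrightarrow> snd F xs \<le> snd F ys)}"

text \<open>Maps D^m \<rightarrow> D^m, canonically represented: length-m lists to length-m lists,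
  all other lists to [].\<close>
type_synonym 'a mmap = "'a list \<Rightarrow> 'a list"

definition valid_map :: "nat \<Rightarrow> 'a mmap \<Rightarrow> bool" where
  "valid_map m g \<longleftrightarrow> (\<forall>xs. (length xs = m \<longrightarrow> length (g xs) = m) \<and> (length xs \<noteq> m \<longrightarrow> g xs = []))"

text \<open>Coordinatewise action of g on X = (x^1,...,x^m) \<in> [D^n]^m.\<close>
definition apply_map :: "nat \<Rightarrow> nat \<Rightarrow> 'a mmap \<Rightarrow> 'a list list \<Rightarrow> 'a list list" where
  "apply_map m n g X = map (\<lambda>i. map (\<lambda>j. g (map (\<lambda>r. r ! j) X) ! i) [0..<n]) [0..<m]"

definition fpow :: "nat \<Rightarrow> 'a cost \<Rightarrow> 'a list list \<Rightarrow> ereal" where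
  "fpow m F X = (\<Sum>i<m. snd F (X ! i)) / ereal (real m)"

definition supp :: "('a mmap \<Rightarrow> real) \<Rightarrow> 'a mmap set" where
  "supp \<rho> = {g. \<rho> g \<noteq> 0}"

definition gen_frac_pol :: "nat \<Rightarrow> 'a cost set \<Rightarrow> ('a mmap \<Rightarrow> real) \<Rightarrow> bool" where
  "gen_frac_pol m \<Gamma> \<rho> \<longleftrightarrow> finite (supp \<rho>) \<and> (\<forall>g. \<rho> g \<ge> 0) \<and> (\<forall>g\<in>supp \<rho>. valid_map m g)
     \<and> (\<Sum>g\<in>supp \<rho>. \<rho> g) = 1
     \<and> (\<forall>F\<in>\<Gamma>. \<forall>X. length X = m \<and> (\<forall>x\<in>set X. x \<in> cdom F) \<longrightarrow>
          (\<Sum>g\<in>supp \<rho>. ereal (\<rho> g) * fpow m F (apply_map m (fst F) g X)) \<le> fpow m F X)"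

definition Omega :: "nat \<Rightarrow> 'a mmap set" where
  "Omega m = {g. valid_map m g \<and> (\<forall>\<pi>. \<pi> permutes {..<m} \<longrightarrow>
      (\<forall>x. length x = m \<longrightarrow> (\<forall>i<m. g x ! (\<pi> i) = g (map (\<lambda>j. x ! (\<pi> j)) [0..<m]) ! i)))}"

definition is_omega :: "nat \<Rightarrow> 'a cost set \<Rightarrow> ('a mmap \<Rightarrow> real) \<Rightarrow> bool" where
  "is_omega m \<Gamma> \<omega> \<longleftrightarrow> gen_frac_pol m \<Gamma> \<omega> \<and> supp \<omega> \<subseteq> Omega m \<and>
     (\<forall>\<rho>. gen_frac_pol m \<Gamma> \<rho> \<and> supp \<rho> \<subseteq> Omega m \<longrightarrow> supp \<rho> \<subseteq> supp \<omega>)"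

definition id_map :: "nat \<Rightarrow> 'a mmap" where
  "id_map m = (\<lambda>xs. if length xs = m then xs else [])"

inductive_set GG :: "nat \<Rightarrow> ('a mmap \<Rightarrow> real) \<Rightarrow> 'a mmap set" for m \<omega> where
  GG_id: "id_map m \<in> GG m \<omega>"
| GG_step: "g \<in> GG m \<omega> \<Longrightarrow> h \<in> supp \<omega> \<Longrightarrow> h \<circ> g \<in> GG m \<omega>"

definition GE :: "nat \<Rightarrow> ('a mmap \<Rightarrow> real) \<Rightarrow> ('a mmap \<times> 'a mmap) set" where
  "GE m \<omega> = {(g, h \<circ> g) | g h. g \<in> GG m \<omega> \<and> h \<in> supp \<omega>}"

definition scc :: "('v \<times> 'v) set \<Rightarrow> 'v \<Rightarrow> 'v set" where
  "scc E v = {w. (v, w) \<in> E\<^sup>* \<and> (w, v) \<in> E\<^sup>*}"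

definition GG_star :: "nat \<Rightarrow> ('a mmap \<Rightarrow> real) \<Rightarrow> 'a mmap set" where
  "GG_star m \<omega> = \<Union>{C. \<exists>g\<in>GG m \<omega>. C = scc (GE m \<omega>) g \<and>
                        (\<forall>(u, v)\<in>GE m \<omega>. u \<in> C \<longrightarrow> v \<in> C)}"

definition Range1 :: "nat \<Rightarrow> 'a mmap set \<Rightarrow> 'a list set" where
  "Range1 m S = {g y | g y. g \<in> S \<and> length y = m}"

definition orbit :: "nat \<Rightarrow> ('a mmap \<Rightarrow> real) \<Rightarrow> 'a list \<Rightarrow> 'a list set" where
  "orbit m \<omega> xh = {g xh | g. g \<in> GG m \<omega>}"

end

theory Submission
  imports Defs
begin

lemma GG_valid:
  assumes "\<forall>h\<in>supp \<omega>. valid_map m h" "m > 0" "g \<in> GG m \<omega>"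
  shows "valid_map m g"
  using assms(3)
proof induction
  case GG_id
  then show ?case by (auto simp: valid_map_def id_map_def)
next
  case (GG_step g h)
  have vh: "valid_map m h" using GG_step assms(1) by blast
  show ?case unfolding valid_map_def
  proof (intro allI conjI impI)
    fix xs :: "'a list"
    assume "length xs = m"
    then show "length ((h \<circ> g) xs) = m" using vh GG_step.IH unfolding valid_map_def by simp
  next
    fix xs :: "'a list"
    assume "length xs \<noteq> m"
    then have "g xs = []" using GG_step.IH unfolding valid_map_def by simp
    moreover have "h [] = []" using vh assms(2) unfolding valid_map_def by simp
    ultimately show "(h \<circ> g) xs = []" by simp
  qed
qed

lemma GG_comp:
  assumes "\<forall>h\<in>supp \<omega>. valid_map m h" "m > 0" "k \<in> GG m \<omega>" "g \<in> GG m \<omega>"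
  shows "k \<circ> g \<in> GG m \<omega> \<and> (g, k \<circ> g) \<in> (GE m \<omega>)\<^sup>*"
  using assms(3)
proof induction
  case GG_id
  have v: "valid_map m g" using GG_valid assms by blast
  have "id_map m \<circ> g = g"
  proof
    fix z show "(id_map m \<circ> g) z = g z"
      using v unfolding valid_map_def id_map_def
      by (cases "length z = m") (auto simp: assms(2))
  qed
  then show ?case using assms(4) by simp
next
  case (GG_step k h)
  have e: "(k \<circ> g, h \<circ> (k \<circ> g)) \<in> GE m \<omega>" using GG_step unfolding GE_def by blast
  have "h \<circ> (k \<circ> g) \<in> GG m \<omega>" using GG_step GG.GG_step[where g="k \<circ> g" and h=h] by blast
  moreover have "(g, h \<circ> (k \<circ> g)) \<in> (GE m \<omega>)\<^sup>*"
    using GG_step e by (meson rtrancl.rtrancl_into_rtrancl)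
  ultimately show ?case by (simp only: comp_assoc)
qed

lemma GE_GG:
  assumes "(u, v) \<in> (GE m \<omega>)\<^sup>*" "u \<in> GG m \<omega>"
  shows "v \<in> GG m \<omega>"
  using assms
proof induction
  case base then show ?case .
next
  case (step y z)
  then obtain g h where "z = h \<circ> g" "g \<in> GG m \<omega>" "h \<in> supp \<omega>" unfolding GE_def by blast
  then show ?case using GG.GG_step by blast
qed

lemma Omega_const:
  assumes "h \<in> Omega m" "m \<ge> 2"
  shows "\<exists>c'. h (replicate m c) = replicate m c'"
proof -
  let ?w = "h (replicate m c)"
  have v: "valid_map m h" and sym: "\<And>\<pi> x i. \<pi> permutes {..<m} \<Longrightarrow> length x = m \<Longrightarrow> i < m \<Longrightarrow>
      h x ! (\<pi> i) = h (map (\<lambda>j. x ! (\<pi> j)) [0..<m]) ! i"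
    using assms(1) unfolding Omega_def by blast+
  have len: "length ?w = m" using v unfolding valid_map_def by simp
  have eq0: "?w ! i = ?w ! 0" if "i < m" for i
  proof -
    have p: "transpose 0 i permutes {..<m}" using that assms(2) by (intro permutes_swap_id) auto
    have "map (\<lambda>j. replicate m c ! (transpose 0 i j)) [0..<m] = replicate m c"
    proof (rule nth_equalityI)
      show "length (map (\<lambda>j. replicate m c ! (transpose 0 i j)) [0..<m]) = length (replicate m c)" by simp
    next
      fix j assume "j < length (map (\<lambda>j. replicate m c ! (transpose 0 i j)) [0..<m])"
      then have j: "j < m" by simp
      then have "transpose 0 i j < m" using permutes_in_image[OF p, of j] by simp
      then show "map (\<lambda>j. replicate m c ! (transpose 0 i j)) [0..<m] ! j = replicate m c ! j" using j by simp
    qed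
    moreover have "?w ! (transpose 0 i 0) = h (map (\<lambda>j. replicate m c ! (transpose 0 i j)) [0..<m]) ! 0"
      using sym[OF p, of "replicate m c" 0] assms(2) by simp
    moreover have "transpose 0 i 0 = i" by simp
    ultimately show ?thesis by simp
  qed
  have "?w = replicate m (?w ! 0)"
  proof (rule nth_equalityI)
    show "length ?w = length (replicate m (?w ! 0))" using len by simp
  next
    fix k assume "k < length ?w"
    then have "k < m" using len by simp
    then show "?w ! k = replicate m (?w ! 0) ! k" using eq0[of k] by (simp only: nth_replicate)
  qed
  then show ?thesis by blast
qed

lemma GE_const:
  assumes "(u, v) \<in> (GE m \<omega>)\<^sup>*" "supp \<omega> \<subseteq> Omega m" "m \<ge> 2"
    "\<exists>c. u z = replicate m c"
  shows "\<exists>c. v z = replicate m c"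
  using assms(1,4)
proof induction
  case base then show ?case .
next
  case (step v w)
  then obtain g h where "v = g" "w = h \<circ> g" "h \<in> supp \<omega>" unfolding GE_def by blast
  obtain c where "v z = replicate m c" using step by blast
  moreover obtain c' where "h (replicate m c) = replicate m c'"
    using Omega_const[of h m c] assms(2,3) \<open>h \<in> supp \<omega>\<close> by blast
  ultimately show ?case using \<open>w = h \<circ> g\<close> \<open>v = g\<close> by auto
qed

lemma closed_rtrancl:
  assumes "(u, v) \<in> E\<^sup>*" "u \<in> C" "\<forall>(a, b)\<in>E. a \<in> C \<longrightarrow> b \<in> C"
  shows "v \<in> C"
  using assms(1,2)
proof induction
  case base then show ?case .
next
  case (step y z) then show ?case using assms(3) by blast
qed

definition mixed :: "('a \<Rightarrow> 'b) \<Rightarrow> nat \<Rightarrow> 'a list \<Rightarrow> bool" where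
  "mixed blk m z \<longleftrightarrow> (\<exists>i<m. \<exists>j<m. blk (z ! i) \<noteq> blk (z ! j))"

definition gmix :: "('a \<Rightarrow> 'b) \<Rightarrow> nat \<Rightarrow> 'a \<Rightarrow> 'a mmap" where
  "gmix blk m c z = (if length z = m then (if mixed blk m z then replicate m c else z) else [])"

lemma gmix_valid: "valid_map m (gmix blk m c)"
  unfolding valid_map_def gmix_def by auto

lemma gmix_Omega: "gmix (blk :: 'a \<Rightarrow> 'b) m c \<in> Omega m"
  unfolding Omega_def
proof (intro CollectI conjI allI impI gmix_valid)
  fix \<pi> and x :: "'a list" and i
  assume p: "\<pi> permutes {..<m}" and lx: "length x = m" and i: "i < m"
  define y where "y = map (\<lambda>j. x ! (\<pi> j)) [0..<m]"
  have ly: "length y = m" unfolding y_def by simp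
  have pin: "\<And>j. j < m \<Longrightarrow> \<pi> j < m" using permutes_in_image[OF p] by simp
  have yn: "\<And>j. j < m \<Longrightarrow> y ! j = x ! (\<pi> j)" unfolding y_def by simp
  have surj: "\<exists>j'<m. \<pi> j' = j" if "j < m" for j
  proof -
    obtain j' where "\<pi> j' = j" using p unfolding permutes_def by metis
    moreover have "j' < m"
    proof (rule ccontr)
      assume "\<not> j' < m"
      then have "\<pi> j' = j'" using p unfolding permutes_def by simp
      then show False using \<open>\<pi> j' = j\<close> \<open>\<not> j' < m\<close> that by simp
    qed
    ultimately show ?thesis by blast
  qed
  have mix: "mixed blk m y \<longleftrightarrow> mixed blk m x"
  proof
    assume "mixed blk m y"
    then obtain a b where "a < m" "b < m" "blk (y ! a) \<noteq> blk (y ! b)" unfolding mixed_def by blast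
    then show "mixed blk m x" unfolding mixed_def using yn pin by metis
  next
    assume "mixed blk m x"
    then obtain a b where ab: "a < m" "b < m" "blk (x ! a) \<noteq> blk (x ! b)" unfolding mixed_def by blast
    obtain a' b' where "a' < m" "b' < m" "\<pi> a' = a" "\<pi> b' = b" using surj ab by metis
    then show "mixed blk m y" unfolding mixed_def using yn ab by metis
  qed
  show "gmix blk m c x ! \<pi> i = gmix blk m c (map (\<lambda>j. x ! \<pi> j) [0..<m]) ! i"
    using mix lx ly yn[OF i] pin[OF i] i unfolding y_def[symmetric] gmix_def by simp
qed

lemma cdom_len:
  assumes "wf_cost F" "r \<in> cdom F"
  shows "length r = fst F"
  using assms unfolding wf_cost_def cdom_def by force

lemma gmix_row:
  assumes "cost_language \<Gamma>" "block_finite \<Gamma> blk" "F \<in> \<Gamma>" "length X = m"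
    "\<forall>r\<in>set X. r \<in> cdom F" "i < m"
  shows "snd F (apply_map m (fst F) (gmix blk m c) X ! i) \<le> snd F (X ! i)"
proof -
  have wf: "wf_cost F" using assms(1,3) unfolding cost_language_def by blast
  have rows: "\<And>r. r \<in> set X \<Longrightarrow> r \<in> cdom F" using assms(5) by blast
  define col where "col j = map (\<lambda>r. r ! j) X" for j
  have am: "apply_map m (fst F) (gmix blk m c) X ! i
       = map (\<lambda>j. gmix blk m c (col j) ! i) [0..<fst F]"
    unfolding apply_map_def col_def using assms(6) by simp
  show ?thesis
  proof (cases "F = eq_cost")
    case True
    have r2: "length r = 2 \<and> r ! 0 = r ! 1" if "r \<in> set X" for r
      using rows[OF that] True unfolding cdom_def eq_cost_def by (auto split: if_splits)
    have "col 0 = col 1" unfolding col_def using r2 by (intro map_cong) auto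
    moreover have "[0..<2] = [0, 1::nat]" by (simp add: upt_rec)
    ultimately have "apply_map m (fst F) (gmix blk m c) X ! i
       = [gmix blk m c (col 1) ! i, gmix blk m c (col 1) ! i]"
      using am True by (simp add: eq_cost_def)
    then have "snd F (apply_map m (fst F) (gmix blk m c) X ! i) = 0"
      using True by (simp add: eq_cost_def)
    moreover have "snd F (X ! i) \<ge> 0" using True by (simp add: eq_cost_def)
    ultimately show ?thesis by simp
  next
    case False
    then obtain vs where vs: "length vs = fst F" "\<forall>xs\<in>cdom F. \<forall>i<fst F. blk (xs ! i) = vs ! i"
      using assms(2,3) unfolding block_finite_def by blast
    have lr: "\<And>r. r \<in> set X \<Longrightarrow> length r = fst F" using cdom_len[OF wf] rows by blast
    have "gmix blk m c (col j) = col j" if "j < fst F" for j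
    proof -
      have lc: "length (col j) = m" unfolding col_def using assms(4) by simp
      have "\<And>a. a < m \<Longrightarrow> blk (col j ! a) = vs ! j"
        unfolding col_def using vs(2) rows that assms(4) by (simp add: nth_mem)
      then have "\<not> mixed blk m (col j)" unfolding mixed_def by simp
      then show ?thesis using lc unfolding gmix_def by simp
    qed
    then have "apply_map m (fst F) (gmix blk m c) X ! i = map (\<lambda>j. col j ! i) [0..<fst F]"
      using am by simp
    also have "\<dots> = X ! i"
    proof (rule nth_equalityI)
      have "length (X ! i) = fst F" using lr assms(4,6) by (simp add: nth_mem)
      then show "length (map (\<lambda>j. col j ! i) [0..<fst F]) = length (X ! i)" by simp
    next
      fix j assume "j < length (map (\<lambda>j. col j ! i) [0..<fst F])"
      then show "map (\<lambda>j. col j ! i) [0..<fst F] ! j = X ! i ! j"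
        unfolding col_def using assms(4,6) by simp
    qed
    finally show ?thesis by simp
  qed
qed

lemma gmix_gfp:
  assumes "cost_language \<Gamma>" "block_finite \<Gamma> blk" "m \<ge> 2"
  shows "gen_frac_pol m \<Gamma> (\<lambda>g. if g = gmix blk m c then 1 else 0)"
proof -
  let ?g = "gmix blk m c"
  let ?\<rho> = "\<lambda>g. if g = ?g then 1 else (0::real)"
  have s: "supp ?\<rho> = {?g}" unfolding supp_def by auto
  have ineq: "fpow m F (apply_map m (fst F) ?g X) \<le> fpow m F X"
    if "F \<in> \<Gamma>" "length X = m" "\<forall>x\<in>set X. x \<in> cdom F" for F X
  proof -
    have "(\<Sum>i<m. snd F (apply_map m (fst F) ?g X ! i)) \<le> (\<Sum>i<m. snd F (X ! i))"
      using gmix_row[OF assms(1,2) that] by (intro sum_mono) simp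
    moreover have "0 < ereal (real m)" using assms(3) by simp
    ultimately show ?thesis unfolding fpow_def by (rule ereal_divide_right_mono)
  qed
  show ?thesis unfolding gen_frac_pol_def s
    using ineq gmix_valid by simp
qed

lemma wf_val: "wf_cost F \<Longrightarrow> snd F xs \<noteq> - \<infinity>"
  unfolding wf_cost_def by (metis MInfty_neq_PInfty(1) MInfty_neq_ereal(1))

lemma inst_obj_Cons: "inst_obj (t # I) s = snd (fst t) (map s (snd t)) + inst_obj I s"
  unfolding inst_obj_def by simp

lemma inst_obj_ninf:
  assumes "cost_language \<Gamma>" "\<forall>t\<in>set I. fst t \<in> \<Gamma>"
  shows "inst_obj I s \<noteq> - \<infinity>"
  using assms(2)
proof (induction I)
  case Nil then show ?case by (simp add: inst_obj_def)
next
  case (Cons t I)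
  have "wf_cost (fst t)" using Cons.prems assms(1) unfolding cost_language_def by simp
  then have "snd (fst t) (map s (snd t)) \<noteq> - \<infinity>" by (rule wf_val)
  moreover have "inst_obj I s \<noteq> - \<infinity>" using Cons by simp
  ultimately show ?case unfolding inst_obj_Cons by simp
qed

lemma inst_obj_map:
  assumes "cost_language \<Gamma>" "\<forall>t\<in>set I. fst t \<in> \<Gamma>"
    "\<forall>F\<in>\<Gamma>. \<forall>xs\<in>cdom F. map ga xs \<in> cdom F" "inst_obj I s < \<infinity>"
  shows "inst_obj I (ga \<circ> s) < \<infinity>"
  using assms(2,4)
proof (induction I)
  case Nil then show ?case by (simp add: inst_obj_def)
next
  case (Cons t I)
  have wf: "wf_cost (fst t)" using Cons.prems assms(1) unfolding cost_language_def by simp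
  have a: "snd (fst t) (map s (snd t)) \<noteq> - \<infinity>" using wf by (rule wf_val)
  have b: "inst_obj I s \<noteq> - \<infinity>" by (rule inst_obj_ninf[OF assms(1)]) (use Cons.prems(1) in simp)
  have "snd (fst t) (map s (snd t)) + inst_obj I s < \<infinity>" using Cons.prems(2) unfolding inst_obj_Cons .
  then have c: "snd (fst t) (map s (snd t)) < \<infinity>" "inst_obj I s < \<infinity>" using a b
    by (cases "snd (fst t) (map s (snd t))"; cases "inst_obj I s"; simp)+
  have "map s (snd t) \<in> cdom (fst t)" using c(1) unfolding cdom_def by simp
  then have "map ga (map s (snd t)) \<in> cdom (fst t)" using assms(3) Cons.prems(1) by (simp only: list.set_intros(1) ball_simps(7))
  then have d: "snd (fst t) (map (ga \<circ> s) (snd t)) < \<infinity>" unfolding cdom_def by (simp add: map_map)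
  have e: "inst_obj I (ga \<circ> s) < \<infinity>" by (rule Cons.IH) (use Cons.prems(1) c(2) in auto)
  have a2: "snd (fst t) (map (ga \<circ> s) (snd t)) \<noteq> - \<infinity>" using wf by (rule wf_val)
  have b2: "inst_obj I (ga \<circ> s) \<noteq> - \<infinity>" by (rule inst_obj_ninf[OF assms(1)]) (use Cons.prems(1) in simp)
  show ?case unfolding inst_obj_Cons using d e a2 b2
    by (cases "snd (fst t) (map (ga \<circ> s) (snd t))"; cases "inst_obj I (ga \<circ> s)"; simp)
qed

theorem lemma7p4:
  fixes \<Gamma> :: "'a::finite cost set" and blk :: "'a \<Rightarrow> 'b" and m :: nat
    and \<omega> :: "'a mmap \<Rightarrow> real" and xh x :: "'a list" and F :: "'a cost"
  assumes "m \<ge> 2"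
    and "cost_language \<Gamma>"
    and "block_finite \<Gamma> blk"
    and "is_omega m \<Gamma> \<omega>"
    and "xh \<in> Range1 m (GG_star m \<omega>)"
    and "x \<in> orbit m \<omega> xh"
    and "F \<in> expr_clone \<Gamma>" and "fst F = m"
    and "argmin_cost F = orbit m \<omega> xh"
  shows "\<forall>a\<in>set x. replicate m a \<in> cdom F"
proof
  fix a assume ax: "a \<in> set x"
  have gfp: "gen_frac_pol m \<Gamma> \<omega>" and sO: "supp \<omega> \<subseteq> Omega m"
    and maxi: "\<And>\<rho>. gen_frac_pol m \<Gamma> \<rho> \<Longrightarrow> supp \<rho> \<subseteq> Omega m \<Longrightarrow> supp \<rho> \<subseteq> supp \<omega>"
    using assms(4) unfolding is_omega_def by blast+
  have vs: "\<forall>h\<in>supp \<omega>. valid_map m h" using gfp unfolding gen_frac_pol_def by blast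
  have m0: "m > 0" using assms(1) by simp
  define c :: 'a where "c = undefined"
  let ?gm = "gmix blk m c"
  let ?\<rho> = "\<lambda>g. if g = ?gm then 1 else (0::real)"
  have s\<rho>: "supp ?\<rho> = {?gm}" unfolding supp_def by auto
  have "supp ?\<rho> \<subseteq> supp \<omega>"
    by (rule maxi[OF gmix_gfp[OF assms(2,3,1)]]) (simp add: s\<rho> gmix_Omega)
  then have gms: "?gm \<in> supp \<omega>" using s\<rho> by simp
  obtain g0 y where xh: "xh = g0 y" and g0: "g0 \<in> GG_star m \<omega>" and ly: "length y = m"
    using assms(5) unfolding Range1_def by blast
  obtain C g1 where g1: "g1 \<in> GG m \<omega>" and C: "C = scc (GE m \<omega>) g1"
    and Ccl: "\<forall>(u, v)\<in>GE m \<omega>. u \<in> C \<longrightarrow> v \<in> C" and g0C: "g0 \<in> C"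
    using g0 unfolding GG_star_def by blast
  have g0G: "g0 \<in> GG m \<omega>" using g0C C GE_GG g1 unfolding scc_def by blast
  obtain k where x: "x = k xh" and k: "k \<in> GG m \<omega>"
    using assms(6) unfolding orbit_def by blast
  define g' where "g' = k \<circ> g0"
  have g'G: "g' \<in> GG m \<omega>" and g0g': "(g0, g') \<in> (GE m \<omega>)\<^sup>*"
    using GG_comp[OF vs m0 k g0G] unfolding g'_def by blast+
  have g'C: "g' \<in> C" using closed_rtrancl[OF g0g' g0C Ccl] .
  have xg': "x = g' y" unfolding g'_def x xh by simp
  have e: "(g', ?gm \<circ> g') \<in> GE m \<omega>" using g'G gms unfolding GE_def by blast
  have "?gm \<circ> g' \<in> C" using Ccl e g'C by blast
  then have p1: "(?gm \<circ> g', g1) \<in> (GE m \<omega>)\<^sup>*" using C unfolding scc_def by blast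
  have p2: "(g1, g') \<in> (GE m \<omega>)\<^sup>*" using g'C C unfolding scc_def by blast
  have p: "(?gm \<circ> g', g') \<in> (GE m \<omega>)\<^sup>*" using p1 p2 by (rule rtrancl_trans)
  have lx: "length x = m" using GG_valid[OF vs m0 g'G] ly xg' unfolding valid_map_def by simp
  have nmix: "\<not> mixed blk m x"
  proof
    assume mx: "mixed blk m x"
    have "(?gm \<circ> g') y = replicate m c" using mx lx xg' unfolding gmix_def by simp
    then obtain c' where "g' y = replicate m c'"
      using GE_const[OF p sO assms(1), of y] by blast
    then have "x = replicate m c'" using xg' by simp
    then show False using mx unfolding mixed_def by auto
  qed
  obtain i where i: "i < m" "x ! i = a" using ax lx by (metis in_set_conv_nth)
  obtain ga where ga1: "\<forall>F\<in>\<Gamma>. \<forall>xs\<in>cdom F. map ga xs \<in> cdom F"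
    and ga2: "\<forall>b. blk b = blk a \<longrightarrow> ga b = a"
    using assms(3) unfolding block_finite_def by blast
  have xfin: "snd F x < \<infinity>" using assms(6,9) unfolding argmin_cost_def by blast
  obtain k' N I where kN: "k' \<le> N" and inst: "vcsp_instance \<Gamma> N I" and Fd:
    "F = (k', \<lambda>xs. if length xs = k' then (INF s\<in>{s. \<forall>i<k'. s i = xs ! i}. inst_obj I s) else \<infinity>)"
    using assms(7) unfolding expr_clone_def by blast
  have k'm: "k' = m" using Fd assms(8) by simp
  have "(INF s\<in>{s. \<forall>i<m. s i = x ! i}. inst_obj I s) < \<infinity>" using xfin Fd k'm lx by simp
  then have "\<exists>s\<in>{s. \<forall>i<m. s i = x ! i}. inst_obj I s < \<infinity>" by (simp only: INF_less_iff)
  then obtain s where s: "\<forall>j<m. s j = x ! j" and sfin: "inst_obj I s < \<infinity>" by blast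
  have tI: "\<forall>t\<in>set I. fst t \<in> \<Gamma>" using inst unfolding vcsp_instance_def by blast
  have fin2: "inst_obj I (ga \<circ> s) < \<infinity>" using inst_obj_map[OF assms(2) tI ga1 sfin] .
  have s2: "ga \<circ> s \<in> {s. \<forall>j<m. s j = replicate m a ! j}"
  proof (intro CollectI allI impI)
    fix j assume j: "j < m"
    have "blk (x ! j) = blk (x ! i)" using nmix j i(1) unfolding mixed_def by blast
    then have "ga (x ! j) = a" using ga2 i(2) by simp
    then show "(ga \<circ> s) j = replicate m a ! j" using s j by simp
  qed
  have "snd F (replicate m a) = (INF s\<in>{s. \<forall>j<m. s j = replicate m a ! j}. inst_obj I s)"
    using Fd k'm by simp
  also have "\<dots> \<le> inst_obj I (ga \<circ> s)" using s2 by (rule INF_lower)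
  finally have "snd F (replicate m a) < \<infinity>" using fin2 by (rule le_less_trans)
  then show "replicate m a \<in> cdom F" unfolding cdom_def by simp
qed

end
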